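(* Let $K\ge1$, let $\mathbf{\Phi}\in\mathbb{R}^{m\times n}$ satisfy the RIP with $\delta_{K+1}<\frac{1}{\sqrt K+1}$, let $\mathbf{x}\in\mathbb{R}^n$ with $|\mathrm{supp}(\mathbf{x})|=K$, $\mathbf{v}\in\mathbb{R}^m$, $\mathbf{y}=\mathbf{\Phi}\mathbf{x}+\mathbf{v}$. If $$\sqrt{\mathrm{SNR}} > \frac{(\sqrt K+1)(1+\delta_{K+1})}{1-(\sqrt K+1)\delta_{K+1}},$$ then every index $t\in\arg\max_{i\in\Omega}|\langle\phi_i,\mathbf{y}\rangle|$ belongs to $\mathrm{supp}(\mathbf{x})$; i.e., the first iteration of OMP selects a correct index.
   Context: $\Omega=\{1,\dots,n\}$; $\phi_i$ is the $i$-th column of $\mathbf{\Phi}$. RIP: for an integer $s\ge1$, the isometry constant $\delta_s$ of $\mathbf{\Phi}$ is the smallest $c\in[0,1)$ such that $(1-c)\|\mathbf{z}\|_2^2 \le \|\mathbf{\Phi}\mathbf{z}\|_2^2 \le (1+c)\|\mathbf{z}\|_2^2$ for all $s$-sparse $\mathbf{z}$. $\mathrm{SNR} := \|\mathbf{\Phi}\mathbf{x}\|_2^2/\|\mathbf{v}\|_2^2$ ($+\infty$ if $\mathbf{v}=\mathbf{0}$). *)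

theory Defs
  imports "HOL-Analysis.Analysis"
begin

definition supp :: "real^'n \<Rightarrow> 'n set" where
  "supp z = {i. z $ i \<noteq> 0}"

definition sparse :: "nat \<Rightarrow> real^'n \<Rightarrow> bool" where
  "sparse s z \<longleftrightarrow> card (supp z) \<le> s"

definition rip_bounds :: "real^'n^'m \<Rightarrow> nat \<Rightarrow> real set" where
  "rip_bounds A s = {c. 0 \<le> c \<and> c < 1 \<and>
     (\<forall>z. sparse s z \<longrightarrow>
        (1 - c) * (norm z)\<^sup>2 \<le> (norm (A *v z))\<^sup>2 \<and> (norm (A *v z))\<^sup>2 \<le> (1 + c) * (norm z)\<^sup>2)}"

definition has_rip :: "real^'n^'m \<Rightarrow> nat \<Rightarrow> bool" where
  "has_rip A s \<longleftrightarrow> rip_bounds A s \<noteq> {}"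

text \<open>The isometry constant delta_s: the smallest admissible c (the set is closed from below).\<close>
definition rip_const :: "real^'n^'m \<Rightarrow> nat \<Rightarrow> real" where
  "rip_const A s = Inf (rip_bounds A s)"

end

theory Submission
  imports Defs
begin

lemma rip_lower_ok:
  assumes "has_rip A s" "sparse s z"
  shows "(1 - rip_const A s) * (norm z)\<^sup>2 \<le> (norm (A *v z))\<^sup>2
       \<and> (norm (A *v z))\<^sup>2 \<le> (1 + rip_const A s) * (norm z)\<^sup>2
       \<and> 0 \<le> rip_const A s"
proof -
  let ?S = "rip_bounds A s"
  have ne: "?S \<noteq> {}" using assms(1) by (simp add: has_rip_def)
  have bdd: "bdd_below ?S" unfolding rip_bounds_def by (rule bdd_belowI[of _ 0]) auto
  have nn: "0 \<le> rip_const A s" unfolding rip_const_def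
    by (rule cInf_greatest[OF ne]) (auto simp: rip_bounds_def)
  show ?thesis
  proof (cases "z = 0")
    case True then show ?thesis using nn by simp
  next
    case False
    then have p: "(norm z)\<^sup>2 > 0" by simp
    have "1 - (norm (A *v z))\<^sup>2 / (norm z)\<^sup>2 \<le> rip_const A s" unfolding rip_const_def
    proof (rule cInf_greatest[OF ne])
      fix c assume "c \<in> ?S"
      then have "(1 - c) * (norm z)\<^sup>2 \<le> (norm (A *v z))\<^sup>2" using assms(2) by (auto simp: rip_bounds_def)
      then show "1 - (norm (A *v z))\<^sup>2 / (norm z)\<^sup>2 \<le> c" using p by (simp add: field_simps)
    qed
    then have 1: "(1 - rip_const A s) * (norm z)\<^sup>2 \<le> (norm (A *v z))\<^sup>2" using p by (simp add: field_simps)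
    have "(norm (A *v z))\<^sup>2 / (norm z)\<^sup>2 - 1 \<le> rip_const A s" unfolding rip_const_def
    proof (rule cInf_greatest[OF ne])
      fix c assume "c \<in> ?S"
      then have "(norm (A *v z))\<^sup>2 \<le> (1 + c) * (norm z)\<^sup>2" using assms(2) by (auto simp: rip_bounds_def)
      then show "(norm (A *v z))\<^sup>2 / (norm z)\<^sup>2 - 1 \<le> c" using p by (simp add: field_simps)
    qed
    then have 2: "(norm (A *v z))\<^sup>2 \<le> (1 + rip_const A s) * (norm z)\<^sup>2" using p by (simp add: field_simps)
    show ?thesis using 1 2 nn by simp
  qed
qed

lemma inner_Ax_y:
  fixes A :: "real^'n^'m"
  shows "(A *v x) \<bullet> y = (\<Sum>i\<in>supp x. x $ i * (column i A \<bullet> y))"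
proof -
  have "(A *v x) \<bullet> y = (\<Sum>i\<in>UNIV. x $ i * (column i A \<bullet> y))"
  proof -
    have "(A *v x) \<bullet> y = (\<Sum>k\<in>UNIV. \<Sum>i\<in>UNIV. A $ k $ i * x $ i * y $ k)"
      by (simp add: inner_vec_def matrix_vector_mult_def sum_distrib_right)
    also have "\<dots> = (\<Sum>i\<in>UNIV. \<Sum>k\<in>UNIV. A $ k $ i * x $ i * y $ k)"
      by (rule sum.swap)
    also have "\<dots> = (\<Sum>i\<in>UNIV. x $ i * (column i A \<bullet> y))"
      by (simp add: inner_vec_def column_def sum_distrib_left mult.commute mult.left_commute)
    finally show ?thesis .
  qed
  also have "\<dots> = (\<Sum>i\<in>supp x. x $ i * (column i A \<bullet> y))"
    by (rule sum.mono_neutral_right) (auto simp: supp_def)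
  finally show ?thesis .
qed

lemma sum_abs_le:
  fixes x :: "real^'n"
  shows "(\<Sum>i\<in>supp x. \<bar>x $ i\<bar>) \<le> sqrt (real (card (supp x))) * norm x"
proof -
  have cs: "(\<Sum>i\<in>supp x. 1 * \<bar>x $ i\<bar>)\<^sup>2 \<le> (\<Sum>i\<in>supp x. 1\<^sup>2) * (\<Sum>i\<in>supp x. \<bar>x $ i\<bar>\<^sup>2)"
    by (rule Cauchy_Schwarz_ineq_sum)
  have "(\<Sum>i\<in>supp x. \<bar>x $ i\<bar>\<^sup>2) = (\<Sum>i\<in>supp x. (x $ i)\<^sup>2)"
    by (simp only: power2_abs)
  also have "\<dots> = (\<Sum>i\<in>UNIV. (x $ i)\<^sup>2)"
    by (rule sum.mono_neutral_left) (auto simp: supp_def)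
  also have "\<dots> = (norm x)\<^sup>2" by (simp add: norm_vec_def L2_set_def sum_nonneg)
  finally have "(\<Sum>i\<in>supp x. \<bar>x $ i\<bar>)\<^sup>2 \<le> (sqrt (real (card (supp x))) * norm x)\<^sup>2"
    using cs by (simp add: power_mult_distrib)
  then show ?thesis by (rule power2_le_imp_le) simp
qed

lemma polar:
  fixes A :: "real^'n^'m"
  assumes "has_rip A s" "sparse s (x + r *\<^sub>R axis j 1)" "sparse s (x - r *\<^sub>R axis j 1)"
    "x $ j = 0" "r = norm x" "r > 0"
  shows "\<bar>column j A \<bullet> (A *v x)\<bar> \<le> rip_const A s * r"
proof -
  let ?e = "axis j (1::real)" let ?d = "rip_const A s"
  have o: "x \<bullet> ?e = 0" using assms(4) by (simp add: inner_axis)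
  have ee: "?e \<bullet> ?e = 1" by (simp add: inner_axis_axis)
  have xx: "x \<bullet> x = r\<^sup>2" using assms(5) by (simp add: dot_square_norm)
  have n1: "(norm (x + r *\<^sub>R ?e))\<^sup>2 = 2 * r\<^sup>2" "(norm (x - r *\<^sub>R ?e))\<^sup>2 = 2 * r\<^sup>2"
  proof -
    have "(norm (x + r *\<^sub>R ?e))\<^sup>2 = (x + r *\<^sub>R ?e) \<bullet> (x + r *\<^sub>R ?e)" by (rule power2_norm_eq_inner)
    also have "\<dots> = x \<bullet> x + 2 * r * (x \<bullet> ?e) + r * r * (?e \<bullet> ?e)"
      by (simp add: inner_add_left inner_add_right inner_commute algebra_simps)
    finally show "(norm (x + r *\<^sub>R ?e))\<^sup>2 = 2 * r\<^sup>2" using o ee xx by (simp add: power2_eq_square)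
    have "(norm (x - r *\<^sub>R ?e))\<^sup>2 = (x - r *\<^sub>R ?e) \<bullet> (x - r *\<^sub>R ?e)" by (rule power2_norm_eq_inner)
    also have "\<dots> = x \<bullet> x - 2 * r * (x \<bullet> ?e) + r * r * (?e \<bullet> ?e)"
      by (simp add: inner_diff_left inner_diff_right inner_commute algebra_simps)
    finally show "(norm (x - r *\<^sub>R ?e))\<^sup>2 = 2 * r\<^sup>2" using o ee xx by (simp add: power2_eq_square)
  qed
  have c: "A *v ?e = column j A" by (rule matrix_vector_mult_basis)
  have p1: "(norm (A *v (x + r *\<^sub>R ?e)))\<^sup>2 = (norm (A *v x))\<^sup>2 + 2 * r * (column j A \<bullet> (A *v x)) + r\<^sup>2 * (norm (column j A))\<^sup>2"
  proof -
    have "A *v (x + r *\<^sub>R ?e) = A *v x + r *\<^sub>R column j A"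
      by (simp add: matrix_vector_right_distrib matrix_vector_mult_scaleR c)
    then have "(norm (A *v (x + r *\<^sub>R ?e)))\<^sup>2 = (A *v x + r *\<^sub>R column j A) \<bullet> (A *v x + r *\<^sub>R column j A)"
      by (simp add: power2_norm_eq_inner)
    also have "\<dots> = (A *v x) \<bullet> (A *v x) + 2 * r * (column j A \<bullet> (A *v x)) + r\<^sup>2 * (column j A \<bullet> column j A)"
      by (simp add: inner_add_left inner_add_right inner_commute algebra_simps power2_eq_square)
    finally show ?thesis by (simp add: dot_square_norm)
  qed
  have p2: "(norm (A *v (x - r *\<^sub>R ?e)))\<^sup>2 = (norm (A *v x))\<^sup>2 - 2 * r * (column j A \<bullet> (A *v x)) + r\<^sup>2 * (norm (column j A))\<^sup>2"
  proof -
    have "A *v (x - r *\<^sub>R ?e) = A *v x - r *\<^sub>R column j A"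
      by (simp add: matrix_vector_mult_diff_distrib matrix_vector_mult_scaleR c)
    then have "(norm (A *v (x - r *\<^sub>R ?e)))\<^sup>2 = (A *v x - r *\<^sub>R column j A) \<bullet> (A *v x - r *\<^sub>R column j A)"
      by (simp add: power2_norm_eq_inner)
    also have "\<dots> = (A *v x) \<bullet> (A *v x) - 2 * r * (column j A \<bullet> (A *v x)) + r\<^sup>2 * (column j A \<bullet> column j A)"
      by (simp add: inner_diff_left inner_diff_right inner_commute algebra_simps power2_eq_square)
    finally show ?thesis by (simp add: dot_square_norm)
  qed
  have a: "(1 - ?d) * (2 * r\<^sup>2) \<le> (norm (A *v (x + r *\<^sub>R ?e)))\<^sup>2" "(norm (A *v (x + r *\<^sub>R ?e)))\<^sup>2 \<le> (1 + ?d) * (2 * r\<^sup>2)"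
    using rip_lower_ok[OF assms(1,2)] n1 by auto
  have b: "(1 - ?d) * (2 * r\<^sup>2) \<le> (norm (A *v (x - r *\<^sub>R ?e)))\<^sup>2" "(norm (A *v (x - r *\<^sub>R ?e)))\<^sup>2 \<le> (1 + ?d) * (2 * r\<^sup>2)"
    using rip_lower_ok[OF assms(1,3)] n1 by auto
  have "4 * r * \<bar>column j A \<bullet> (A *v x)\<bar> \<le> 4 * r * (?d * r)"
    using a b p1 p2 by (auto simp: abs_if power2_eq_square algebra_simps)
  then show ?thesis using assms(6) by simp
qed

lemma final_arith:
  fixes a r e d S G :: real
  assumes a: "a > 0" and r: "r > 0" and e: "e \<ge> 0" and d: "0 \<le> d" and dS: "(S + 1) * d < 1" and S: "S \<ge> 1"
    and low: "(1 - d) * r\<^sup>2 \<le> a\<^sup>2" and G: "G \<le> d * r + sqrt (1 + d) * e"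
    and key: "a\<^sup>2 - a * e \<le> S * r * G"
    and snr: "e = 0 \<or> a / e > (S + 1) * (1 + d) / (1 - (S + 1) * d)"
  shows False
proof -
  have d1: "d < 1" using dS d S by (smt (verit) mult_le_cancel_right1)
  have s1: "sqrt (1 - d) * r \<le> a"
  proof -
    have "(sqrt (1 - d) * r)\<^sup>2 \<le> a\<^sup>2" using low d1 by (simp add: power_mult_distrib)
    then show ?thesis using a by (rule power2_le_imp_le[OF _ less_imp_le]) 
  qed
  have s2: "(1 - d) * r \<le> sqrt (1 - d) * a"
  proof -
    have "(1 - d) * r = sqrt (1 - d) * (sqrt (1 - d) * r)" using d1
      by (simp add: real_sqrt_mult_self mult.assoc[symmetric])
    also have "\<dots> \<le> sqrt (1 - d) * a" using s1 by (rule mult_left_mono) (use d1 in simp)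
    finally show ?thesis .
  qed
  have "S * r * G \<le> S * r * (d * r + sqrt (1 + d) * e)" using G S r by (simp add: mult_left_mono)
  then have k2: "a\<^sup>2 - a * e \<le> S * d * r\<^sup>2 + S * sqrt (1 + d) * e * r" using key
    by (simp add: algebra_simps power2_eq_square)
  have "(1 - d) * (a\<^sup>2 - a * e) \<le> (1 - d) * (S * d * r\<^sup>2 + S * sqrt (1 + d) * e * r)"
    using k2 d1 by (simp add: mult_left_mono)
  also have "\<dots> = S * d * ((1 - d) * r\<^sup>2) + S * sqrt (1 + d) * e * ((1 - d) * r)" by (simp add: algebra_simps)
  also have "\<dots> \<le> S * d * a\<^sup>2 + S * sqrt (1 + d) * e * (sqrt (1 - d) * a)"
    apply (rule add_mono)
    using low S d apply (simp add: mult_left_mono)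
    using s2 S e d by (intro mult_left_mono) auto
  finally have k3: "(1 - d) * (a\<^sup>2 - a * e) \<le> S * d * a\<^sup>2 + S * (sqrt (1 + d) * sqrt (1 - d)) * e * a"
    by (simp add: algebra_simps)
  have sq: "sqrt (1 + d) * sqrt (1 - d) \<le> 1 + d"
  proof -
    have "sqrt (1 + d) * sqrt (1 - d) = sqrt ((1+d)*(1-d))" by (simp add: real_sqrt_mult)
    also have "\<dots> \<le> sqrt ((1+d)*(1+d))" using d d1 by (intro real_sqrt_le_mono) (simp add: mult_left_mono)
    also have "\<dots> = 1 + d" using d by simp
    finally show ?thesis .
  qed
  have "S * (sqrt (1 + d) * sqrt (1 - d)) * e * a \<le> S * (1 + d) * e * a"
    using sq S e a by (simp add: mult_left_mono mult_right_mono)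
  with k3 have k4: "(1 - d) * (a\<^sup>2 - a * e) \<le> S * d * a\<^sup>2 + S * (1 + d) * e * a" by linarith
  have k5: "a * (1 - (S + 1) * d) \<le> e * (S + 1) * (1 + d)"
  proof -
    have "a * ((1 - d) * (a - e)) \<le> a * (S * d * a + S * (1 + d) * e)"
      using k4 by (simp add: algebra_simps power2_eq_square)
    then have "(1 - d) * (a - e) \<le> S * d * a + S * (1 + d) * e" using a by simp
    then show ?thesis using d e by (simp add: algebra_simps) (smt (verit) mult_nonneg_nonneg)
  qed
  show False
  proof (cases "e = 0")
    case True
    then have "a * (1 - (S + 1) * d) \<le> 0" using k5 by simp
    moreover have "a * (1 - (S + 1) * d) > 0" using a dS by simp
    ultimately show False by linarith
  next
    case False
    then have e0: "e > 0" using e by simp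
    from snr False have "a / e > (S + 1) * (1 + d) / (1 - (S + 1) * d)" by simp
    then have "a * (1 - (S + 1) * d) > e * ((S + 1) * (1 + d))" using e0 dS
      by (simp add: field_simps)
    then show False using k5 by (simp add: algebra_simps)
  qed
qed
theorem mainTheorem5:
  fixes \<Phi> :: "real^'n^'m" and x :: "real^'n" and v y :: "real^'m" and K :: nat and t :: 'n
  assumes K: "K \<ge> 1"
    and rip: "has_rip \<Phi> (K + 1)"
    and delta: "rip_const \<Phi> (K + 1) < 1 / (sqrt (real K) + 1)"
    and suppx: "card (supp x) = K"
    and y: "y = \<Phi> *v x + v"
    and snr: "v = 0 \<or>
      sqrt ((norm (\<Phi> *v x))\<^sup>2 / (norm v)\<^sup>2) >
        (sqrt (real K) + 1) * (1 + rip_const \<Phi> (K + 1))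
          / (1 - (sqrt (real K) + 1) * rip_const \<Phi> (K + 1))"
    and t: "\<forall>i. \<bar>column i \<Phi> \<bullet> y\<bar> \<le> \<bar>column t \<Phi> \<bullet> y\<bar>"
  shows "t \<in> supp x"
proof (rule ccontr)
  assume nt: "t \<notin> supp x"
  define d where "d = rip_const \<Phi> (K + 1)"
  define r where "r = norm x"
  define a where "a = norm (\<Phi> *v x)"
  define e where "e = norm v"
  define G where "G = \<bar>column t \<Phi> \<bullet> y\<bar>"
  define S where "S = sqrt (real K)"
  have S1: "S \<ge> 1" using K by (simp add: S_def)
  have spx: "sparse (K + 1) x" using suppx by (simp add: sparse_def)
  have R: "(1 - d) * r\<^sup>2 \<le> a\<^sup>2" "0 \<le> d"
    using rip_lower_ok[OF rip spx] by (auto simp: d_def r_def a_def)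
  have dS0: "d < 1 / (S + 1)" using delta by (simp add: d_def S_def)
  have dS: "(S + 1) * d < 1" using dS0 S1 by (simp add: pos_less_divide_eq mult.commute)
  have "1 / (S + 1) \<le> 1" using S1 by simp
  then have d1: "d < 1" using dS0 by linarith
  have x0: "x \<noteq> 0"
  proof
    assume "x = 0"
    then have "supp x = {}" by (simp add: supp_def)
    with suppx K show False by simp
  qed
  then have r0: "r > 0" by (simp add: r_def)
  have a0: "a > 0"
  proof -
    have "(1 - d) * r\<^sup>2 > 0" using d1 r0 by simp
    then have "a\<^sup>2 > 0" using R(1) by linarith
    then show ?thesis by (simp add: a_def)
  qed
  have xt: "x $ t = 0" using nt by (simp add: supp_def)
  have fin: "finite (supp x)" by simp
  have sp_pm: "sparse (K + 1) (x + c *\<^sub>R axis t 1)" for c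
  proof -
    have "supp (x + c *\<^sub>R axis t 1) \<subseteq> insert t (supp x)"
      by (auto simp: supp_def axis_def)
    then have "card (supp (x + c *\<^sub>R axis t 1)) \<le> card (insert t (supp x))"
      by (intro card_mono) auto
    also have "\<dots> \<le> K + 1" using suppx card_insert_le_m1 by (simp add: card_insert_if)
    finally show ?thesis by (simp add: sparse_def)
  qed
  have sp_m: "sparse (K + 1) (x - r *\<^sub>R axis t 1)"
    using sp_pm[of "- r"] by simp
  have b1: "\<bar>column t \<Phi> \<bullet> (\<Phi> *v x)\<bar> \<le> d * r"
    using polar[OF rip sp_pm sp_m xt r_def r0] by (simp add: d_def)
  have spe: "sparse (K + 1) (axis t (1::real))"
  proof -
    have "supp (axis t (1::real)) = {t}" by (auto simp: supp_def axis_def)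
    then show ?thesis by (simp add: sparse_def)
  qed
  have "(norm (column t \<Phi>))\<^sup>2 \<le> (1 + d) * 1"
    using rip_lower_ok[OF rip spe] by (simp add: matrix_vector_mult_basis d_def)
  then have nc: "norm (column t \<Phi>) \<le> sqrt (1 + d)"
    using real_le_rsqrt by simp
  have b2: "\<bar>column t \<Phi> \<bullet> v\<bar> \<le> sqrt (1 + d) * e"
  proof -
    have "\<bar>column t \<Phi> \<bullet> v\<bar> \<le> norm (column t \<Phi>) * norm v" by (rule Cauchy_Schwarz_ineq2)
    also have "\<dots> \<le> sqrt (1 + d) * e" unfolding e_def using nc by (simp add: mult_right_mono)
    finally show ?thesis .
  qed
  have Gb: "G \<le> d * r + sqrt (1 + d) * e"
  proof -
    have "G \<le> \<bar>column t \<Phi> \<bullet> (\<Phi> *v x)\<bar> + \<bar>column t \<Phi> \<bullet> v\<bar>"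
      unfolding G_def y by (simp add: inner_add_right abs_triangle_ineq)
    then show ?thesis using b1 b2 by linarith
  qed
  have lowk: "a\<^sup>2 - a * e \<le> (\<Phi> *v x) \<bullet> y"
  proof -
    have "(\<Phi> *v x) \<bullet> y = a\<^sup>2 + (\<Phi> *v x) \<bullet> v"
      by (simp add: y inner_add_right a_def power2_norm_eq_inner)
    moreover have "- (a * e) \<le> (\<Phi> *v x) \<bullet> v"
      using Cauchy_Schwarz_ineq2[of "\<Phi> *v x" v] by (simp add: a_def e_def)
    ultimately show ?thesis by simp
  qed
  have upk: "(\<Phi> *v x) \<bullet> y \<le> S * r * G"
  proof -
    have "(\<Phi> *v x) \<bullet> y = (\<Sum>i\<in>supp x. x $ i * (column i \<Phi> \<bullet> y))" by (rule inner_Ax_y)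
    also have "\<dots> \<le> (\<Sum>i\<in>supp x. \<bar>x $ i\<bar> * G)"
    proof (rule sum_mono)
      fix i
      have "x $ i * (column i \<Phi> \<bullet> y) \<le> \<bar>x $ i\<bar> * \<bar>column i \<Phi> \<bullet> y\<bar>"
        by (metis abs_ge_self abs_mult)
      also have "\<dots> \<le> \<bar>x $ i\<bar> * G" unfolding G_def using t by (simp add: mult_left_mono)
      finally show "x $ i * (column i \<Phi> \<bullet> y) \<le> \<bar>x $ i\<bar> * G" .
    qed
    also have "\<dots> = (\<Sum>i\<in>supp x. \<bar>x $ i\<bar>) * G" by (simp add: sum_distrib_right)
    also have "\<dots> \<le> (S * r) * G"
      using sum_abs_le[of x] suppx by (intro mult_right_mono) (auto simp: S_def r_def G_def)
    finally show ?thesis .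
  qed
  have snr': "e = 0 \<or> a / e > (S + 1) * (1 + d) / (1 - (S + 1) * d)"
  proof (cases "e = 0")
    case False
    then have "v \<noteq> 0" by (simp add: e_def)
    with snr have "sqrt (a\<^sup>2 / e\<^sup>2) > (S + 1) * (1 + d) / (1 - (S + 1) * d)"
      by (simp add: a_def e_def S_def d_def)
    moreover have "sqrt (a\<^sup>2 / e\<^sup>2) = a / e" using a0 by (simp add: e_def a_def real_sqrt_divide)
    ultimately show ?thesis by simp
  qed simp
  show False
    using final_arith[OF a0 r0 _ R(2) dS S1 R(1) Gb _ snr'] lowk upk by (simp add: e_def)
qed

end
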